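(* Let $I$ be a connected and locally connected topological space and $h:I\to\mathbb{R}$ a positive continuous function attaining its lower bound at $v\in I$. (i) If $y\in I$, $\lambda\le h(y)$, $z\in C_{y,\lambda}$ and $h(z)>\lambda$, then $z$ lies in the interior of $C_{y,\lambda}$. (ii) If $x,x'\in I$, $\lambda\le h(x)$, $\lambda'\le h(x')$, $C_{x',\lambda'}\subset C_{x,\lambda}$ and $\lambda'>\lambda$, then $C_{x,\lambda}$ is a neighbourhood of $C_{x',\lambda'}$.
   Context: For $x\in I$ and $\lambda\le h(x)$, $C_{x,\lambda}$ denotes the maximal connected subset of $\{y\in I: h(y)\ge\lambda\}$ containing $x$. *)

theory Defs
  imports "HOL-Analysis.Analysis"
begin

definition levelComp :: "'a topology \<Rightarrow> ('a \<Rightarrow> real) \<Rightarrow> 'a \<Rightarrow> real \<Rightarrow> 'a set" where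
  "levelComp X h x lam =
     connected_component_of_set (subtopology X {y \<in> topspace X. h y \<ge> lam}) x"

end

theory Submission
  imports Defs
begin

lemma partI:
  assumes lc: "locally_connected_space X"
    and hc: "continuous_map X euclideanreal h"
    and z: "z \<in> levelComp X h y lam" and hz: "h z > lam"
  shows "z \<in> X interior_of (levelComp X h y lam)"
proof -
  define S where "S = {w \<in> topspace X. h w \<ge> lam}"
  have C: "levelComp X h y lam = connected_component_of_set (subtopology X S) y"
    by (simp add: levelComp_def S_def)
  have zc: "connected_component_of (subtopology X S) y z" using z C by simp
  have zt: "z \<in> topspace X"
    using connected_component_of_subset_topspace[of "subtopology X S" y] z C by auto
  have U: "openin X {w \<in> topspace X. h w \<in> {lam<..}}"
    by (rule openin_continuous_map_preimage[OF hc]) auto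
  obtain V where V: "openin X V" "connectedin X V" "z \<in> V"
      "V \<subseteq> {w \<in> topspace X. h w \<in> {lam<..}}"
    using lc U zt hz unfolding locally_connected_space by (metis (no_types, lifting) greaterThan_iff mem_Collect_eq)
  have VS: "V \<subseteq> S" using V(4) by (auto simp: S_def)
  have "connectedin (subtopology X S) V" using V(2) VS by (simp add: connectedin_subtopology)
  then have "V \<subseteq> levelComp X h y lam"
    using zc V(3) C connected_component_of_trans unfolding connected_component_of_def
    by (smt (verit, best) mem_Collect_eq subsetI)
  then show ?thesis using V(1,3) interior_of_maximal by blast
qed

theorem mainTheorem6:
  fixes X :: "'a topology" and h :: "'a \<Rightarrow> real" and v :: 'a
  assumes "connected_space X" and "locally_connected_space X"
    and "continuous_map X euclideanreal h"
    and "\<forall>x\<in>topspace X. h x > 0"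
    and "v \<in> topspace X" and "\<forall>x\<in>topspace X. h v \<le> h x"
  shows "(\<forall>y z lam. y \<in> topspace X \<and> lam \<le> h y \<and> z \<in> levelComp X h y lam \<and> h z > lam
            \<longrightarrow> z \<in> X interior_of (levelComp X h y lam))
       \<and> (\<forall>x x' lam lam'. x \<in> topspace X \<and> x' \<in> topspace X \<and> lam \<le> h x \<and> lam' \<le> h x'
            \<and> levelComp X h x' lam' \<subseteq> levelComp X h x lam \<and> lam' > lam
            \<longrightarrow> levelComp X h x' lam' \<subseteq> X interior_of (levelComp X h x lam))"
proof (intro conjI allI impI)
  fix y z lam assume "y \<in> topspace X \<and> lam \<le> h y \<and> z \<in> levelComp X h y lam \<and> h z > lam"
  then show "z \<in> X interior_of (levelComp X h y lam)"
    using partI[OF assms(2,3)] by blast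
next
  fix x x' lam lam' assume a: "x \<in> topspace X \<and> x' \<in> topspace X \<and> lam \<le> h x \<and> lam' \<le> h x'
            \<and> levelComp X h x' lam' \<subseteq> levelComp X h x lam \<and> lam' > lam"
  show "levelComp X h x' lam' \<subseteq> X interior_of (levelComp X h x lam)"
  proof
    fix z assume z: "z \<in> levelComp X h x' lam'"
    have "z \<in> {w \<in> topspace X. h w \<ge> lam'}"
      using z connected_component_of_subset_topspace[of "subtopology X {w \<in> topspace X. h w \<ge> lam'}" x']
      by (auto simp: levelComp_def)
    then have "h z > lam" using a by auto
    then show "z \<in> X interior_of (levelComp X h x lam)"
      using partI[OF assms(2,3)] a z by blast
  qed
qed

end
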